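(* Let $p$ be a prime, $R$ an $F$-pure ring of characteristic $p$, and $f\in R$ a non-zero non-unit. Let $d\ge1$ and $\alpha\in[0,1]\cap\frac{1}{p^d}\mathbb{N}$. If for some $e\ge1$ the inclusion $R\cdot f^{\lceil p^e\alpha\rceil/p^e}\subseteq R^{1/p^e}$ splits over $R$, then the inclusion $R\cdot f^{\alpha}\subseteq R^{1/p^d}$ splits over $R$.
   Context: A ring $R$ of characteristic $p$ is $F$-pure if $R\subseteq R^{1/p}$ splits as a map of $R$-modules; such a ring is reduced. Roots. $R^{1/p^e}$ is the ring of formal symbols $r^{1/p^e}$ ($r\in R$), with $r^{1/p^e}+s^{1/p^e}=(r+s)^{1/p^e}$ and $r^{1/p^e}s^{1/p^e}=(rs)^{1/p^e}$. It contains $R$ via $r\mapsto(r^{p^e})^{1/p^e}$. Powers of $f$. For $a\in\mathbb{N}$, $f^{a/p^e}:=(f^a)^{1/p^e}$; in particular $f^\alpha=f^{a/p^d}$ when $\alpha=a/p^d$. Splitting. The inclusion $R\cdot t\subseteq R^{1/p^e}$ splits over $R$ if some $R$-linear $\theta:R^{1/p^e}\to R$ has $\theta(t)=1$. *)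

theory Defs
  imports Complex_Main "HOL-Computational_Algebra.Primes"
begin

text \<open>The ring R is modelled as the whole type 'a. The module R^{1/p^e} of formal
symbols r^{1/p^e} is, as an additive group, a copy of R (r^{1/p^e} corresponds to r),
with R acting by  s . r^{1/p^e} = (s^{p^e} r)^{1/p^e}. Hence an R-linear map
R^{1/p^e} -> R is an additive map th : 'a -> 'a with th (s^(p^e) * r) = s * th r.\<close>

definition root_linear :: "nat \<Rightarrow> nat \<Rightarrow> ('a::comm_ring_1 \<Rightarrow> 'a) \<Rightarrow> bool" where
  "root_linear p e th \<longleftrightarrow>
     (\<forall>x y. th (x + y) = th x + th y) \<and> (\<forall>s r. th (s ^ (p ^ e) * r) = s * th r)"

text \<open>F-purity: the inclusion R \<subseteq> R^{1/p}, r \<mapsto> (r^p)^{1/p}, splits over R.\<close>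
definition F_pure :: "nat \<Rightarrow> 'a::comm_ring_1 itself \<Rightarrow> bool" where
  "F_pure p _ \<longleftrightarrow> (\<exists>th :: 'a \<Rightarrow> 'a. root_linear p 1 th \<and> (\<forall>r. th (r ^ p) = r))"

text \<open>The inclusion R \<cdot> t^{1/p^e} \<subseteq> R^{1/p^e} splits over R
 (t^{1/p^e} represented by t).\<close>
definition splits_root :: "nat \<Rightarrow> nat \<Rightarrow> 'a::comm_ring_1 \<Rightarrow> bool" where
  "splits_root p e t \<longleftrightarrow> (\<exists>th. root_linear p e th \<and> th t = 1)"

end

theory Submission
  imports Defs
begin

lemma frob_add:
  fixes x y :: "'a::comm_ring_1"
  assumes p: "prime p" and c: "CHAR('a) = p"
  shows "(x + y) ^ p = x ^ p + y ^ p"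
proof -
  have p1: "p > 1" using p prime_gt_1_nat by blast
  have mid: "(\<Sum>k\<in>{1..<p}. of_nat (p choose k) * x ^ k * y ^ (p - k)) = (0::'a)"
  proof (rule sum.neutral, clarify)
    fix k assume k: "k \<in> {1..<p}"
    have "p dvd (p choose k)" using k p by (intro dvd_choose_prime) auto
    hence "of_nat (p choose k) = (0::'a)" using c by (simp add: of_nat_eq_0_iff_char_dvd)
    thus "of_nat (p choose k) * x ^ k * y ^ (p - k) = 0" by simp
  qed
  have split: "{..p} = insert 0 (insert p {1..<p})" using p1 by auto
  have "(x + y) ^ p = (\<Sum>k\<le>p. of_nat (p choose k) * x ^ k * y ^ (p - k))"
    by (rule binomial_ring)
  also have "\<dots> = y ^ p + x ^ p + (\<Sum>k\<in>{1..<p}. of_nat (p choose k) * x ^ k * y ^ (p - k))"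
    unfolding split using p1 by (simp add: add.assoc)
  finally show ?thesis using mid by (simp add: add.commute)
qed

lemma frob_add_pow:
  fixes x y :: "'a::comm_ring_1"
  assumes p: "prime p" and c: "CHAR('a) = p"
  shows "(x + y) ^ (p ^ m) = x ^ (p ^ m) + y ^ (p ^ m)"
proof (induction m)
  case 0 then show ?case by simp
next
  case (Suc m)
  have "(x + y) ^ (p ^ Suc m) = ((x + y) ^ (p ^ m)) ^ p"
    by (metis power_Suc2 power_mult)
  also have "\<dots> = (x ^ (p ^ m)) ^ p + (y ^ (p ^ m)) ^ p" using Suc frob_add[OF p c] by simp
  also have "\<dots> = x ^ (p ^ Suc m) + y ^ (p ^ Suc m)"
    by (simp add: power_mult[symmetric] mult.commute)
  finally show ?case .
qed

lemma iter_split: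
  fixes th :: "'a::comm_ring_1 \<Rightarrow> 'a"
  assumes "root_linear p 1 th" "\<forall>r. th (r ^ p) = r"
  shows "root_linear p k (th ^^ k) \<and> (\<forall>r. (th ^^ k) (r ^ (p ^ k)) = r)"
proof (induction k)
  case 0 then show ?case by (simp add: root_linear_def)
next
  case (Suc k)
  have add: "\<forall>x y. th (x + y) = th x + th y" and lin: "\<forall>s r. th (s ^ p * r) = s * th r"
    using assms(1) by (auto simp: root_linear_def)
  have ps: "\<And>s::'a. s ^ (p ^ Suc k) = (s ^ (p ^ k)) ^ p"
    by (simp add: power_mult[symmetric] mult.commute)
  have "root_linear p (Suc k) (th ^^ Suc k)"
    unfolding root_linear_def
  proof (intro conjI allI)
    fix x y show "(th ^^ Suc k) (x + y) = (th ^^ Suc k) x + (th ^^ Suc k) y"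
      using Suc add by (simp add: root_linear_def)
  next
    fix s r
    have "(th ^^ Suc k) (s ^ p ^ Suc k * r) = (th ^^ k) (th ((s ^ (p ^ k)) ^ p * r))"
      by (simp only: ps funpow_Suc_right comp_def)
    also have "\<dots> = (th ^^ k) (s ^ (p ^ k) * th r)" using lin by simp
    also have "\<dots> = s * (th ^^ Suc k) r"
      using Suc by (simp add: root_linear_def funpow_Suc_right del: funpow.simps)
    finally show "(th ^^ Suc k) (s ^ p ^ Suc k * r) = s * (th ^^ Suc k) r" .
  qed
  moreover have "\<forall>r. (th ^^ Suc k) (r ^ (p ^ Suc k)) = r"
  proof
    fix r
    have "(th ^^ Suc k) (r ^ (p ^ Suc k)) = (th ^^ k) (th ((r ^ (p ^ k)) ^ p))"
      by (simp only: ps funpow_Suc_right comp_def)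
    also have "\<dots> = r" using Suc assms(2) by simp
    finally show "(th ^^ Suc k) (r ^ (p ^ Suc k)) = r" .
  qed
  ultimately show ?case by blast
qed

theorem mainTheorem9:
  fixes f :: "'a::comm_ring_1" and p d e a :: nat
  assumes "prime p"
    and "CHAR('a) = p"
    and "F_pure p TYPE('a)"
    and "f \<noteq> 0" and "\<not> f dvd 1"
    and "d \<ge> 1"
    and "a \<le> p ^ d"
    and "e \<ge> 1"
    and "splits_root p e (f ^ nat \<lceil>real (p ^ e) * (real a / real (p ^ d))\<rceil>)"
  shows "splits_root p d (f ^ a)"
proof -
  define b where "b = nat \<lceil>real (p ^ e) * (real a / real (p ^ d))\<rceil>"
  obtain phi where phi: "root_linear p e phi" "phi (f ^ b) = 1"
    using assms(9) unfolding splits_root_def b_def by blast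
  have padd: "\<forall>x y. phi (x + y) = phi x + phi y" and plin: "\<forall>s r. phi (s ^ (p ^ e) * r) = s * phi r"
    using phi(1) by (auto simp: root_linear_def)
  have ppos: "p > 0" using assms(1) prime_gt_0_nat by blast
  show ?thesis
  proof (cases "d \<le> e")
    case True
    define m where "m = e - d"
    have em: "p ^ e = p ^ d * p ^ m" using True by (simp add: m_def power_add[symmetric])
    have "real (p ^ e) * (real a / real (p ^ d)) = real (a * p ^ m)"
      using ppos by (simp add: em field_simps)
    hence bm: "b = a * p ^ m" unfolding b_def by (metis ceiling_of_nat nat_int)
    define psi where "psi = (\<lambda>r. phi (r ^ (p ^ m)))"
    have "root_linear p d psi"
      unfolding root_linear_def psi_def
    proof (intro conjI allI)
      fix x y show "phi ((x + y) ^ p ^ m) = phi (x ^ p ^ m) + phi (y ^ p ^ m)"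
        using frob_add_pow[OF assms(1,2)] padd by simp
    next
      fix s r
      have "(s ^ p ^ d * r) ^ p ^ m = s ^ (p ^ d * p ^ m) * (r::'a) ^ p ^ m"
        by (simp add: power_mult_distrib power_mult)
      also have "\<dots> = s ^ (p ^ e) * r ^ p ^ m" by (simp only: em)
      finally have eq: "(s ^ p ^ d * r) ^ p ^ m = s ^ (p ^ e) * r ^ p ^ m" .
      have "phi (s ^ (p ^ e) * r ^ p ^ m) = s * phi (r ^ p ^ m)" using plin by blast
      thus "phi ((s ^ p ^ d * r) ^ p ^ m) = s * phi (r ^ p ^ m)" by (simp only: eq)
    qed
    moreover have "psi (f ^ a) = 1" using phi(2) by (simp add: psi_def bm power_mult)
    ultimately show ?thesis unfolding splits_root_def by blast
  next
    case False
    define k where "k = d - e"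
    have dk: "p ^ d = p ^ e * p ^ k" using False by (simp add: k_def power_add[symmetric])
    have "real (p ^ e) * (real a / real (p ^ d)) = real a / real (p ^ k)"
      using ppos by (simp add: dk field_simps)
    hence bk: "b = nat \<lceil>real a / real (p ^ k)\<rceil>" unfolding b_def by simp
    have cnn: "\<lceil>real a / real (p ^ k)\<rceil> \<ge> 0" by (simp add: order.trans[OF _ divide_nonneg_nonneg] less_le_trans[of "-1" 0])
    have "real b = of_int \<lceil>real a / real (p ^ k)\<rceil>" unfolding bk using cnn by simp
    hence "real a / real (p ^ k) \<le> real b" by (simp add: le_of_int_ceiling)
    hence "real a \<le> real b * real (p ^ k)" using ppos by (simp add: divide_le_eq)
    hence ab: "a \<le> b * p ^ k" by (metis of_nat_le_iff of_nat_mult)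
    obtain th :: "'a \<Rightarrow> 'a" where th: "root_linear p 1 th" "\<forall>r. th (r ^ p) = r"
      using assms(3) unfolding F_pure_def by blast
    have T: "root_linear p k (th ^^ k)" "\<forall>r. (th ^^ k) (r ^ (p ^ k)) = r"
      using iter_split[OF th] by auto
    have tadd: "\<forall>x y. (th ^^ k) (x + y) = (th ^^ k) x + (th ^^ k) y"
      and tlin: "\<forall>s r. (th ^^ k) (s ^ (p ^ k) * r) = s * (th ^^ k) r"
      using T(1) by (auto simp: root_linear_def)
    define c where "c = f ^ (b * p ^ k - a)"
    define psi where "psi = (\<lambda>r. phi ((th ^^ k) (c * r)))"
    have "root_linear p d psi"
      unfolding root_linear_def psi_def
    proof (intro conjI allI)
      fix x y show "phi ((th ^^ k) (c * (x + y))) = phi ((th ^^ k) (c * x)) + phi ((th ^^ k) (c * y))"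
        using tadd padd by (simp add: distrib_left)
    next
      fix s r
      have "c * (s ^ p ^ d * r) = (s ^ p ^ e) ^ p ^ k * (c * r)"
        by (simp add: dk power_mult ac_simps)
      thus "phi ((th ^^ k) (c * (s ^ p ^ d * r))) = s * phi ((th ^^ k) (c * r))"
        using tlin plin by simp
    qed
    moreover have "psi (f ^ a) = 1"
    proof -
      have "c * f ^ a = (f ^ b) ^ (p ^ k)" using ab
        by (simp add: c_def power_add[symmetric] power_mult[symmetric])
      thus ?thesis using T(2) phi(2) by (simp add: psi_def)
    qed
    ultimately show ?thesis unfolding splits_root_def by blast
  qed
qed

end
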